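(* Let $P$ be a distribution on $\mathcal{X}$, $R>0$, $K>0$. Then $E_e(P,R,K,0)=E_e(P,R,K)$, where \[ E_e(P,R,K,0)=\min\Big\{\min_{TV\widetilde{V}:\; B_{T\widetilde{V}}\le B_{TV}\le K} F(TV,T\widetilde{V}),\ \min_{TV\widetilde{V}:\; B_{TV}\ge K} F(TV,T\widetilde{V})\Big\}, \] \[ F(TV,T\widetilde{V})=D(TV\|PW)+\big|A_{T\widetilde{V}}-R+|B_{T\widetilde{V}}-K|^{+}\big|^{+}, \] and \[ E_e(P,R,K)=\min_{TV}\Big\{D(TV\|PW)+\big|A_{TV}-R+|B_{TV}-K|^{+}\big|^{+}\Big\}. \]
   Context: $\mathcal{X},\mathcal{Y}$ are finite alphabets and $W(y|x)$ is a conditional distribution on $\mathcal{Y}$ given $\mathcal{X}$. Logs are natural. $TV$, $T\widetilde{V}$ denote joint distributions on $\mathcal{Y}\times\mathcal{X}$ with common $\mathcal{Y}$-marginal $T$ and conditionals $V(x|y)$, $\widetilde{V}(x|y)$; minima are over all such distributions. $PW$ is the joint distribution $P(x)W(y|x)$; $D(TV\|PW)=\sum T(y)V(x|y)\log\frac{T(y)V(x|y)}{P(x)W(y|x)}$; $A_{TV}=\sum T(y)V(x|y)\log\frac{V(x|y)}{P(x)}$; $B_{TV}=\mathbb{E}_{TV}[-\log W(Y|X)]$; $|t|^{+}=\max\{0,t\}$. *)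

theory Defs
  imports "HOL-Analysis.Analysis"
begin

definition is_dist :: "('a::finite \<Rightarrow> real) \<Rightarrow> bool" where
  "is_dist p \<longleftrightarrow> (\<forall>a. 0 \<le> p a) \<and> sum p UNIV = 1"

text \<open>A channel W(y|x), written W x y.\<close>
definition is_channel :: "('x::finite \<Rightarrow> 'y::finite \<Rightarrow> real) \<Rightarrow> bool" where
  "is_channel W \<longleftrightarrow> (\<forall>x. is_dist (W x))"

text \<open>A joint distribution TV on Y x X is represented by its mass function
  Q y x = T(y) V(x|y); T is its Y-marginal.\<close>
definition is_joint :: "('y::finite \<Rightarrow> 'x::finite \<Rightarrow> real) \<Rightarrow> bool" where
  "is_joint Q \<longleftrightarrow> (\<forall>y x. 0 \<le> Q y x) \<and> (\<Sum>y\<in>UNIV. \<Sum>x\<in>UNIV. Q y x) = 1"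

definition ymarg :: "('y::finite \<Rightarrow> 'x::finite \<Rightarrow> real) \<Rightarrow> 'y \<Rightarrow> real" where
  "ymarg Q y = (\<Sum>x\<in>UNIV. Q y x)"

definition xlog_ratio :: "real \<Rightarrow> real \<Rightarrow> ereal" where
  "xlog_ratio q d = (if q = 0 then 0 else if d = 0 then \<infinity> else ereal (q * ln (q / d)))"

definition divg :: "('y::finite \<Rightarrow> 'x::finite \<Rightarrow> real) \<Rightarrow> ('x \<Rightarrow> real) \<Rightarrow> ('x \<Rightarrow> 'y \<Rightarrow> real) \<Rightarrow> ereal" where
  "divg Q P W = (\<Sum>y\<in>UNIV. \<Sum>x\<in>UNIV. xlog_ratio (Q y x) (P x * W x y))"

text \<open>A_{TV} = sum T(y) V(x|y) log (V(x|y)/P(x)) = sum Q log (Q / (T P))\<close>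
definition A_term :: "('y::finite \<Rightarrow> 'x::finite \<Rightarrow> real) \<Rightarrow> ('x \<Rightarrow> real) \<Rightarrow> ereal" where
  "A_term Q P = (\<Sum>y\<in>UNIV. \<Sum>x\<in>UNIV. xlog_ratio (Q y x) (ymarg Q y * P x))"

definition B_term :: "('y::finite \<Rightarrow> 'x::finite \<Rightarrow> real) \<Rightarrow> ('x \<Rightarrow> 'y \<Rightarrow> real) \<Rightarrow> ereal" where
  "B_term Q W = (\<Sum>y\<in>UNIV. \<Sum>x\<in>UNIV.
      (if Q y x = 0 then 0 else if W x y = 0 then \<infinity> else ereal (- Q y x * ln (W x y))))"

definition pospart :: "ereal \<Rightarrow> ereal" where
  "pospart t = max 0 t"

definition F_fun :: "('x::finite \<Rightarrow> real) \<Rightarrow> ('x \<Rightarrow> 'y::finite \<Rightarrow> real) \<Rightarrow> real \<Rightarrow> real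
    \<Rightarrow> ('y \<Rightarrow> 'x \<Rightarrow> real) \<Rightarrow> ('y \<Rightarrow> 'x \<Rightarrow> real) \<Rightarrow> ereal" where
  "F_fun P W R K Q Q' =
     divg Q P W + pospart (A_term Q' P - ereal R + pospart (B_term Q' W - ereal K))"

definition joint_pairs :: "(('y::finite \<Rightarrow> 'x::finite \<Rightarrow> real) \<times> ('y \<Rightarrow> 'x \<Rightarrow> real)) set" where
  "joint_pairs = {(Q, Q'). is_joint Q \<and> is_joint Q' \<and> ymarg Q = ymarg Q'}"

definition Ee0 :: "('x::finite \<Rightarrow> real) \<Rightarrow> ('x \<Rightarrow> 'y::finite \<Rightarrow> real) \<Rightarrow> real \<Rightarrow> real \<Rightarrow> ereal" where
  "Ee0 P W R K = min
     (INF QQ \<in> {(Q, Q') \<in> joint_pairs. B_term Q' W \<le> B_term Q W \<and> B_term Q W \<le> ereal K}.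
        F_fun P W R K (fst QQ) (snd QQ))
     (INF QQ \<in> {(Q, Q') \<in> joint_pairs. B_term Q W \<ge> ereal K}.
        F_fun P W R K (fst QQ) (snd QQ))"

definition Ee :: "('x::finite \<Rightarrow> real) \<Rightarrow> ('x \<Rightarrow> 'y::finite \<Rightarrow> real) \<Rightarrow> real \<Rightarrow> real \<Rightarrow> ereal" where
  "Ee P W R K = (INF Q \<in> {Q. is_joint Q}.
     divg Q P W + pospart (A_term Q P - ereal R + pospart (B_term Q W - ereal K)))"

end

theory Submission
  imports Defs
begin


lemma sum_not_minf:
  fixes f :: "'a \<Rightarrow> ereal"
  assumes "\<And>i. f i \<noteq> -\<infinity>"
  shows "sum f S \<noteq> -\<infinity>"
proof (cases "finite S")
  case True then show ?thesis
  proof (induction S rule: finite_induct)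
    case (insert x F) then show ?case using assms[of x] by (cases "f x"; cases "sum f F") auto
  qed simp
qed simp

lemma xlog_not_minf: "xlog_ratio q d \<noteq> -\<infinity>"
  by (simp add: xlog_ratio_def)

lemma A_not_minf: "A_term Q P \<noteq> -\<infinity>"
  unfolding A_term_def by (intro sum_not_minf xlog_not_minf)

lemma B_not_minf: "B_term Q W \<noteq> -\<infinity>"
  unfolding B_term_def by (intro sum_not_minf) auto

lemma term_id:
  fixes q T p w :: real
  assumes "0 \<le> q" "q \<le> T" "0 \<le> p" "0 \<le> w"
  shows "xlog_ratio q (p * w) = xlog_ratio q (T * p)
     + (if q = 0 then 0 else if w = 0 then \<infinity> else ereal (- q * ln w)) + ereal (q * ln T)"
proof (cases "q = 0")
  case True then show ?thesis by (simp add: xlog_ratio_def)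
next
  case False
  then have q: "q > 0" using assms by auto
  then have T: "T > 0" using assms by auto
  show ?thesis
  proof (cases "p = 0")
    case True then show ?thesis using q T by (simp add: xlog_ratio_def)
  next
    case False
    then have p: "p > 0" using assms by auto
    show ?thesis
    proof (cases "w = 0")
      case True then show ?thesis using q T p by (simp add: xlog_ratio_def)
    next
      case False
      then have w: "w > 0" using assms by auto
      have "q * ln (q / (p * w)) = q * ln (q / (T * p)) + - q * ln w + q * ln T"
        using q T p w by (simp add: ln_div ln_mult algebra_simps)
      then show ?thesis using q T p w by (simp add: xlog_ratio_def)
    qed
  qed
qed

lemma divg_id:
  fixes Q :: "'y::finite \<Rightarrow> 'x::finite \<Rightarrow> real"
  assumes "is_joint Q" "is_dist P" "is_channel W"
  shows "divg Q P W = A_term Q P + B_term Q W + ereal (\<Sum>y\<in>UNIV. ymarg Q y * ln (ymarg Q y))"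
proof -
  have Q0: "\<And>y x. 0 \<le> Q y x" using assms(1) by (simp add: is_joint_def)
  have le: "\<And>y x. Q y x \<le> ymarg Q y" unfolding ymarg_def
    by (rule member_le_sum) (auto simp: Q0)
  have P0: "\<And>x. 0 \<le> P x" using assms(2) by (simp add: is_dist_def)
  have W0: "\<And>x y. 0 \<le> W x y" using assms(3) by (simp add: is_channel_def is_dist_def)
  have "divg Q P W = (\<Sum>y\<in>UNIV. \<Sum>x\<in>UNIV. xlog_ratio (Q y x) (ymarg Q y * P x)
     + (if Q y x = 0 then 0 else if W x y = 0 then \<infinity> else ereal (- Q y x * ln (W x y)))
     + ereal (Q y x * ln (ymarg Q y)))"
    unfolding divg_def by (intro sum.cong refl term_id Q0 le P0 W0)
  also have "\<dots> = A_term Q P + B_term Q W + (\<Sum>y\<in>UNIV. \<Sum>x\<in>UNIV. ereal (Q y x * ln (ymarg Q y)))"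
    unfolding A_term_def B_term_def by (simp add: sum.distrib)
  also have "(\<Sum>y\<in>UNIV. \<Sum>x\<in>UNIV. ereal (Q y x * ln (ymarg Q y))) = ereal (\<Sum>y\<in>UNIV. ymarg Q y * ln (ymarg Q y))"
    by (simp add: ymarg_def sum_distrib_right)
  finally show ?thesis .
qed
lemma key1:
  fixes a b a' b' :: ereal and c R K :: real
  assumes "a \<noteq> -\<infinity>" "b \<noteq> -\<infinity>" "a' \<noteq> -\<infinity>" "b' \<noteq> -\<infinity>"
    and "b' \<le> b" "b \<le> ereal K"
  shows "(a+b+ereal c) + pospart (a - ereal R + pospart (b - ereal K)) \<le> (a+b+ereal c) + pospart (a' - ereal R + pospart (b' - ereal K))
     \<or> (a'+b'+ereal c) + pospart (a' - ereal R + pospart (b' - ereal K)) \<le> (a+b+ereal c) + pospart (a' - ereal R + pospart (b' - ereal K))"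
  using assms
  by (cases a; cases b; cases a'; cases b') (auto simp: pospart_def max_def split: if_splits)

lemma key2:
  fixes a b a' b' :: ereal and c R K :: real
  assumes "a \<noteq> -\<infinity>" "b \<noteq> -\<infinity>" "a' \<noteq> -\<infinity>" "b' \<noteq> -\<infinity>"
    and "ereal K \<le> b"
  shows "(a+b+ereal c) + pospart (a - ereal R + pospart (b - ereal K)) \<le> (a+b+ereal c) + pospart (a' - ereal R + pospart (b' - ereal K))
     \<or> (a'+b'+ereal c) + pospart (a' - ereal R + pospart (b' - ereal K)) \<le> (a+b+ereal c) + pospart (a' - ereal R + pospart (b' - ereal K))"
  using assms
  by (cases a; cases b; cases a'; cases b') (auto simp: pospart_def max_def split: if_splits)

definition Gq where "Gq P W R K Q = divg Q P W + pospart (A_term Q P - ereal R + pospart (B_term Q W - ereal K))"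

lemma pair_bound:
  fixes Q Q' :: "'y::finite \<Rightarrow> 'x::finite \<Rightarrow> real"
  assumes "is_dist P" "is_channel W" "(Q, Q') \<in> joint_pairs"
    and "(B_term Q' W \<le> B_term Q W \<and> B_term Q W \<le> ereal K) \<or> ereal K \<le> B_term Q W"
  shows "\<exists>Q''. is_joint Q'' \<and> Gq P W R K Q'' \<le> F_fun P W R K Q Q'"
proof -
  have j: "is_joint Q" "is_joint Q'" and m: "ymarg Q = ymarg Q'" using assms(3) by (auto simp: joint_pairs_def)
  define c where "c = (\<Sum>y\<in>UNIV. ymarg Q y * ln (ymarg Q y))"
  have d: "divg Q P W = A_term Q P + B_term Q W + ereal c" using divg_id[OF j(1) assms(1,2)] c_def by simp
  have d': "divg Q' P W = A_term Q' P + B_term Q' W + ereal c" using divg_id[OF j(2) assms(1,2)] c_def m by simp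
  have "Gq P W R K Q \<le> F_fun P W R K Q Q' \<or> Gq P W R K Q' \<le> F_fun P W R K Q Q'"
    unfolding Gq_def F_fun_def d d' using assms(4) key1 key2 A_not_minf B_not_minf by blast
  then show ?thesis using j by blast
qed

theorem lemma4:
  fixes P :: "'x::finite \<Rightarrow> real" and W :: "'x \<Rightarrow> 'y::finite \<Rightarrow> real"
    and R K :: real
  assumes "is_dist P" and "is_channel W" and "R > 0" and "K > 0"
  shows "Ee0 P W R K = Ee P W R K"
proof (rule antisym)
  have EeG: "Ee P W R K = (INF Q \<in> {Q. is_joint Q}. Gq P W R K Q)" unfolding Ee_def Gq_def by simp
  show "Ee0 P W R K \<le> Ee P W R K"
    unfolding EeG
  proof (rule INF_greatest)
    fix Q :: "'y \<Rightarrow> 'x \<Rightarrow> real" assume "Q \<in> {Q. is_joint Q}"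
    then have jp: "(Q, Q) \<in> joint_pairs" by (simp add: joint_pairs_def)
    have F: "F_fun P W R K Q Q = Gq P W R K Q" by (simp add: F_fun_def Gq_def)
    show "Ee0 P W R K \<le> Gq P W R K Q"
    proof (cases "B_term Q W \<le> ereal K")
      case True
      then have "(Q, Q) \<in> {(Q, Q') \<in> joint_pairs. B_term Q' W \<le> B_term Q W \<and> B_term Q W \<le> ereal K}"
        using jp by simp
      then have "(INF QQ \<in> {(Q, Q') \<in> joint_pairs. B_term Q' W \<le> B_term Q W \<and> B_term Q W \<le> ereal K}.
          F_fun P W R K (fst QQ) (snd QQ)) \<le> Gq P W R K Q"
        by (rule INF_lower2) (simp add: F)
      then show ?thesis unfolding Ee0_def by (rule min.coboundedI1)
    next
      case False
      then have "(Q, Q) \<in> {(Q, Q') \<in> joint_pairs. B_term Q W \<ge> ereal K}"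
        using jp by simp
      then have "(INF QQ \<in> {(Q, Q') \<in> joint_pairs. B_term Q W \<ge> ereal K}.
          F_fun P W R K (fst QQ) (snd QQ)) \<le> Gq P W R K Q"
        by (rule INF_lower2) (simp add: F)
      then show ?thesis unfolding Ee0_def by (rule min.coboundedI2)
    qed
  qed
  have gen: "Ee P W R K \<le> F_fun P W R K Q Q'"
    if h1: "(Q, Q') \<in> joint_pairs"
      and h2: "(B_term Q' W \<le> B_term Q W \<and> B_term Q W \<le> ereal K) \<or> ereal K \<le> B_term Q W" for Q Q'
  proof -
    obtain Q'' where "is_joint Q''" "Gq P W R K Q'' \<le> F_fun P W R K Q Q'"
      using pair_bound[OF assms(1,2) h1 h2] by blast
    then show ?thesis unfolding EeG by (intro INF_lower2[of Q'']) auto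
  qed
  show "Ee P W R K \<le> Ee0 P W R K"
    unfolding Ee0_def
    by (intro min.boundedI INF_greatest) (auto intro: gen)
qed

end
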